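(* Let $V$ be a countable set, $\Omega_0$ a finite set, $\Omega=\Omega_0^V$, $q\in\mathbb N$, and let $\gamma=(\gamma_\Lambda)_{\Lambda\Subset V}$ be a quasilocal $q$-specification. Let $f:\Omega^q\to\mathbb R$ be continuous and $\Lambda\Subset V$. Then the map $$(\eta_1,\dots,\eta_q)\mapsto\gamma^{\otimes q}_\Lambda f(\eta_1,\dots,\eta_q):=\int_{\Omega^q}f(\sigma_1,\dots,\sigma_q)\prod_{i=1}^q\gamma_\Lambda(d\sigma_i\mid\eta_1,\dots,\eta_q)$$ is continuous on $\Omega^q$.
   Context: $\Omega$ carries the product $\sigma$-algebra $\mathcal F$ and the topology of pointwise (coordinatewise) convergence: $\sigma^{(n)}\to\sigma$ iff $\sigma^{(n)}(x)\to\sigma(x)$ for every $x\in V$; $\Omega^q$ carries the product topology, and $f:\Omega^q\to\mathbb R$ is continuous if $f(w^{(n)})\to f(w)$ whenever $w^{(n)}\to w$. For $\Delta\subset V$, $\mathcal F_\Delta$ is the $\sigma$-algebra generated by coordinates in $\Delta$, $\mathcal F^q_{\Lambda^c}=(\mathcal F_{\Lambda^c})^{\otimes q}$. A probability $q$-kernel is a map $\gamma_\Lambda:\mathcal F\times\Omega^q\to[0,1]$ with $\gamma_\Lambda(\cdot\mid\eta_1,\dots,\eta_q)$ a probability measure and $\gamma_\Lambda(A\mid\cdot)$ $\mathcal F^q_{\Lambda^c}$-measurable; proper means $\gamma_\Lambda(A\mid\eta_1,\dots,\eta_q)=\frac1q\sum_i\mathbf 1_A(\eta_i)$ for $A\in\mathcal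 F_{\Lambda^c}$. Composition: $(\gamma_\Delta\gamma_\Lambda)(A\mid\eta)=\int_{\Omega^q}\gamma_\Lambda(A\mid\zeta_1,\dots,\zeta_q)\prod_i\gamma_\Delta(d\zeta_i\mid\eta)$. A $q$-specification is a family of proper probability $q$-kernels $(\gamma_\Lambda)_{\Lambda\Subset V}$ with $\gamma_\Delta\gamma_\Lambda=\gamma_\Delta$ for $\Lambda\subset\Delta\Subset V$. It is quasilocal if for each $\Lambda\Subset V$ and every event $A\in\mathcal F_\Lambda$ the map $(\omega_1,\dots,\omega_q)\mapsto\gamma_\Lambda(A\mid\omega_1,\dots,\omega_q)$ is continuous on $\Omega^q$. *)

theory Defs
  imports "HOL-Probability.Probability"
begin

text \<open>Spin space Omega = Omega0^V with V = type 'v (countable), Omega0 = type 'a (finite).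
  q-tuples of configurations are functions 'q => ('v => 'a) with 'q a finite type,
  q = CARD('q).\<close>

definition Omega_M :: "('v \<Rightarrow> 'a) measure" where
  "Omega_M = PiM UNIV (\<lambda>_. count_space UNIV)"

definition F_sub :: "'v set \<Rightarrow> ('v \<Rightarrow> 'a) measure" where
  "F_sub \<Delta> = sigma UNIV {{\<sigma>. \<sigma> x = a} | x a. x \<in> \<Delta>}"

definition seq_conv :: "(nat \<Rightarrow> 'q \<Rightarrow> 'v \<Rightarrow> 'a) \<Rightarrow> ('q \<Rightarrow> 'v \<Rightarrow> 'a) \<Rightarrow> bool" where
  "seq_conv w w0 \<longleftrightarrow> (\<forall>i x. \<forall>\<^sub>F n in sequentially. w n i x = w0 i x)"

definition seq_continuous :: "(('q \<Rightarrow> 'v \<Rightarrow> 'a) \<Rightarrow> real) \<Rightarrow> bool" where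
  "seq_continuous f \<longleftrightarrow> (\<forall>w w0. seq_conv w w0 \<longrightarrow> (\<lambda>n. f (w n)) \<longlonglongrightarrow> f w0)"

definition prob_q_kernel :: "'v set \<Rightarrow> (('q \<Rightarrow> 'v \<Rightarrow> 'a) \<Rightarrow> ('v \<Rightarrow> 'a) measure) \<Rightarrow> bool" where
  "prob_q_kernel \<Lambda> k \<longleftrightarrow>
     (\<forall>\<eta>. prob_space (k \<eta>) \<and> sets (k \<eta>) = sets Omega_M) \<and>
     (\<forall>A \<in> sets Omega_M. (\<lambda>\<eta>. measure (k \<eta>) A) \<in> borel_measurable (PiM UNIV (\<lambda>_::'q. F_sub (- \<Lambda>))))"

definition proper_q_kernel :: "'v set \<Rightarrow> (('q::finite \<Rightarrow> 'v \<Rightarrow> 'a) \<Rightarrow> ('v \<Rightarrow> 'a) measure) \<Rightarrow> bool" where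
  "proper_q_kernel \<Lambda> k \<longleftrightarrow>
     (\<forall>A \<in> sets (F_sub (- \<Lambda>)). \<forall>\<eta>.
        measure (k \<eta>) A = (\<Sum>i\<in>UNIV. indicator A (\<eta> i)) / real CARD('q))"

definition q_specification ::
  "('v set \<Rightarrow> ('q::finite \<Rightarrow> 'v \<Rightarrow> 'a) \<Rightarrow> ('v \<Rightarrow> 'a) measure) \<Rightarrow> bool" where
  "q_specification \<gamma> \<longleftrightarrow>
     (\<forall>\<Lambda>. finite \<Lambda> \<longrightarrow> prob_q_kernel \<Lambda> (\<gamma> \<Lambda>) \<and> proper_q_kernel \<Lambda> (\<gamma> \<Lambda>)) \<and>
     (\<forall>\<Lambda> \<Delta>. \<Lambda> \<subseteq> \<Delta> \<and> finite \<Delta> \<longrightarrow>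
        (\<forall>A \<in> sets Omega_M. \<forall>\<eta>.
           (\<integral>\<zeta>. measure (\<gamma> \<Lambda> \<zeta>) A \<partial>(PiM UNIV (\<lambda>_. \<gamma> \<Delta> \<eta>))) = measure (\<gamma> \<Delta> \<eta>) A))"

definition quasilocal ::
  "('v set \<Rightarrow> ('q \<Rightarrow> 'v \<Rightarrow> 'a) \<Rightarrow> ('v \<Rightarrow> 'a) measure) \<Rightarrow> bool" where
  "quasilocal \<gamma> \<longleftrightarrow>
     (\<forall>\<Lambda>. finite \<Lambda> \<longrightarrow> (\<forall>A \<in> sets (F_sub \<Lambda>). seq_continuous (\<lambda>\<eta>. measure (\<gamma> \<Lambda> \<eta>) A)))"

end

theory Submission imports Defs "HOL-Library.Diagonal_Subsequence" begin

lemma space_Omega_M[simp]: "space (Omega_M :: ('v \<Rightarrow> 'a) measure) = UNIV"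
  by (simp add: Omega_M_def space_PiM)

lemma space_F_sub[simp]: "space (F_sub D :: ('v \<Rightarrow> 'a) measure) = UNIV"
  by (simp add: F_sub_def space_measure_of_conv)

lemma sets_F_sub: "sets (F_sub D :: ('v \<Rightarrow> 'a) measure) = sigma_sets UNIV {{\<sigma>. \<sigma> x = a} | x a. x \<in> D}"
  unfolding F_sub_def by (rule sets_measure_of) auto

lemma gen_in_Omega: "{\<sigma>::'v\<Rightarrow>'a. \<sigma> x = a} \<in> sets Omega_M"
proof -
  have "(\<lambda>\<sigma>::'v\<Rightarrow>'a. \<sigma> x) \<in> Omega_M \<rightarrow>\<^sub>M count_space UNIV"
    unfolding Omega_M_def by (rule measurable_component_singleton) simp
  from measurable_sets[OF this, of "{a}"] show ?thesis by (simp add: vimage_def)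
qed

lemma sets_F_sub_sub: "sets (F_sub D :: ('v \<Rightarrow> 'a) measure) \<subseteq> sets Omega_M"
  unfolding sets_F_sub
proof -
  have "{{\<sigma>::'v\<Rightarrow>'a. \<sigma> x = a} | x a. x \<in> D} \<subseteq> sets Omega_M" using gen_in_Omega by auto
  from sets.sigma_sets_subset[OF this] show "sigma_sets UNIV {{\<sigma>::'v\<Rightarrow>'a. \<sigma> x = a} | x a. x \<in> D} \<subseteq> sets Omega_M" by simp
qed

lemma cyl_in_F_sub:
  fixes \<xi> :: "'v::countable \<Rightarrow> 'a"
  assumes "W \<subseteq> D"
  shows "{\<sigma>. \<forall>x\<in>W. \<sigma> x = \<xi> x} \<in> sets (F_sub D)"
proof -
  have "{\<sigma>. \<forall>x\<in>W. \<sigma> x = \<xi> x} = (\<Inter>x\<in>W. {\<sigma>. \<sigma> x = \<xi> x})" by auto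
  also have "\<dots> \<in> sets (F_sub D)"
  proof (rule sets.countable_INT'')
    show "UNIV \<in> sets (F_sub D)" using sets.top[of "F_sub D"] by simp
    show "countable W" by simp
    fix x assume "x \<in> W"
    then show "{\<sigma>. \<sigma> x = \<xi> x} \<in> sets (F_sub D)" unfolding sets_F_sub using assms
      by (intro sigma_sets.Basic) auto
  qed
  finally show ?thesis .
qed

lemma F_sub_sat:
  assumes "A \<in> sets (F_sub D)" "\<forall>x\<in>D. s x = t x"
  shows "s \<in> A \<longleftrightarrow> t \<in> A"
  using assms(1) unfolding sets_F_sub
proof (induction rule: sigma_sets.induct)
  case (Basic a) then show ?case using assms(2) by auto
next
  case Empty then show ?case by simp
next
  case (Compl a) then show ?case by simp
next
  case (Union a) then show ?case by simp
qed

lemma PiM_F_sub_sat: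
  assumes "X \<in> sets (PiM UNIV (\<lambda>_. F_sub D))" "\<forall>i. \<forall>x\<in>D. s i x = t i x"
  shows "s \<in> X \<longleftrightarrow> t \<in> X"
  using assms(1) unfolding sets_PiM_single
proof (induction rule: sigma_sets.induct)
  case (Basic a)
  then obtain i A where "a = {f \<in> UNIV. f i \<in> A}" "A \<in> sets (F_sub D)"
    by (auto simp: PiE_UNIV_domain)
  then show ?case using F_sub_sat[of A D "s i" "t i"] assms(2) by auto
next
  case Empty then show ?case by simp
next
  case (Compl a) then show ?case by (simp add: PiE_UNIV_domain)
next
  case (Union a) then show ?case by simp
qed

lemma meas_sat:
  fixes g :: "('q \<Rightarrow> 'v \<Rightarrow> 'a) \<Rightarrow> real"
  assumes "g \<in> borel_measurable (PiM UNIV (\<lambda>_. F_sub D))" "\<forall>i. \<forall>x\<in>D. s i x = t i x"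
  shows "g s = g t"
proof -
  have "g -` {g t} \<inter> space (PiM UNIV (\<lambda>_. F_sub D)) \<in> sets (PiM UNIV (\<lambda>_. F_sub D))"
    by (rule measurable_sets[OF assms(1)]) simp
  then have "g -` {g t} \<in> sets (PiM UNIV (\<lambda>_. F_sub D))" by (simp add: space_PiM PiE_UNIV_domain)
  from PiM_F_sub_sat[OF this assms(2)] show ?thesis by simp
qed


definition Ecl :: "'v set \<Rightarrow> ('v \<Rightarrow> 'a) \<Rightarrow> ('v \<Rightarrow> 'a) set" where
  "Ecl L a = {\<sigma>. \<forall>x\<in>-L. \<sigma> x = a x}"

lemma Ecl_in: "Ecl L (a::'v::countable \<Rightarrow> 'a) \<in> sets (F_sub (-L))"
  unfolding Ecl_def by (rule cyl_in_F_sub) simp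

lemma Ecl_in_Omega: "Ecl L (a::'v::countable \<Rightarrow> 'a) \<in> sets Omega_M"
  using Ecl_in sets_F_sub_sub by blast

lemma id_Omega_F: "(\<lambda>x. x) \<in> Omega_M \<rightarrow>\<^sub>M F_sub D"
  by (rule measurableI) (use sets_F_sub_sub in auto)

lemma PiM_F_to_Omega:
  assumes "g \<in> borel_measurable (PiM UNIV (\<lambda>_::'q. F_sub D :: ('v \<Rightarrow> 'a) measure))"
  shows "g \<in> borel_measurable (PiM UNIV (\<lambda>_::'q. Omega_M :: ('v \<Rightarrow> 'a) measure))"
proof -
  have "(\<lambda>\<omega> i. (\<lambda>x. x) (\<omega> i)) \<in> PiM UNIV (\<lambda>_::'q. Omega_M :: ('v \<Rightarrow> 'a) measure) \<rightarrow>\<^sub>M PiM UNIV (\<lambda>_::'q. F_sub D)"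
  proof (rule measurable_PiM_single')
    fix i :: 'q
    have "(\<lambda>\<omega>. \<omega> i) \<in> PiM UNIV (\<lambda>_::'q. Omega_M :: ('v \<Rightarrow> 'a) measure) \<rightarrow>\<^sub>M Omega_M"
      by (rule measurable_component_singleton) simp
    from measurable_compose[OF this id_Omega_F]
    show "(\<lambda>\<omega>. (\<lambda>x. x) (\<omega> i)) \<in> PiM UNIV (\<lambda>_::'q. Omega_M :: ('v \<Rightarrow> 'a) measure) \<rightarrow>\<^sub>M F_sub D" .
  qed (auto simp: space_PiM)
  then have "(\<lambda>\<omega>. \<omega>) \<in> PiM UNIV (\<lambda>_::'q. Omega_M :: ('v \<Rightarrow> 'a) measure) \<rightarrow>\<^sub>M PiM UNIV (\<lambda>_::'q. F_sub D)" by simp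
  from measurable_comp[OF this assms] show ?thesis by (simp add: o_def)
qed

locale qspec =
  fixes \<gamma> :: "'v::countable set \<Rightarrow> ('q::finite \<Rightarrow> 'v \<Rightarrow> 'a::finite) \<Rightarrow> ('v \<Rightarrow> 'a) measure"
    and \<Lambda> :: "'v set"
  assumes spec: "q_specification \<gamma>" and finL: "finite \<Lambda>"
begin

abbreviation "\<mu> \<equiv> \<gamma> \<Lambda>"
abbreviation "PP \<eta> \<equiv> PiM UNIV (\<lambda>_::'q. \<mu> \<eta>)"

lemma prob[simp]: "prob_space (\<mu> \<eta>)" and sets_mu[simp]: "sets (\<mu> \<eta>) = sets Omega_M"
  using spec finL unfolding q_specification_def prob_q_kernel_def by auto

lemma space_mu[simp]: "space (\<mu> \<eta>) = UNIV"
  using sets_eq_imp_space_eq[OF sets_mu] by simp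

lemma kmeas: "A \<in> sets Omega_M \<Longrightarrow> (\<lambda>\<eta>. measure (\<mu> \<eta>) A) \<in> borel_measurable (PiM UNIV (\<lambda>_::'q. F_sub (- \<Lambda>)))"
  using spec finL unfolding q_specification_def prob_q_kernel_def by auto

lemma proper: "A \<in> sets (F_sub (-\<Lambda>)) \<Longrightarrow> measure (\<mu> \<eta>) A = (\<Sum>i\<in>UNIV. indicator A (\<eta> i)) / real CARD('q)"
  using spec finL unfolding q_specification_def proper_q_kernel_def by auto

lemma idem: "A \<in> sets Omega_M \<Longrightarrow> (\<integral>\<zeta>. measure (\<mu> \<zeta>) A \<partial>PP \<eta>) = measure (\<mu> \<eta>) A"
  using spec finL unfolding q_specification_def by auto

lemma prob_PP[simp]: "prob_space (PP \<eta>)"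
  by (rule prob_space_PiM) simp

lemma sets_PP: "sets (PP \<eta>) = sets (PiM UNIV (\<lambda>_::'q. Omega_M))"
  by (rule sets_PiM_cong) auto

lemma space_PP[simp]: "space (PP \<eta>) = UNIV"
  by (simp add: space_PiM PiE_UNIV_domain)

lemma meas_PP: "g \<in> borel_measurable (PiM UNIV (\<lambda>_::'q. Omega_M)) \<Longrightarrow> g \<in> borel_measurable (PP \<eta>)"
  by (simp add: measurable_cong_sets[OF sets_PP[of \<eta>] refl])


lemma mixture_integral:
  assumes gm: "g \<in> borel_measurable Omega_M"
    and gs: "\<And>\<sigma> \<sigma>'. (\<forall>x\<in>-\<Lambda>. \<sigma> x = \<sigma>' x) \<Longrightarrow> g \<sigma> = g \<sigma>'"
  shows "(\<integral>\<sigma>. g \<sigma> \<partial>\<mu> \<eta>) = (\<Sum>i\<in>UNIV. g (\<eta> i)) / real CARD('q)"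
proof -
  interpret p: prob_space "\<mu> \<eta>" by simp
  define U where "U = (\<Union>i. Ecl \<Lambda> (\<eta> i))"
  have U_in: "U \<in> sets (F_sub (-\<Lambda>))" unfolding U_def
    by (rule sets.countable_UN'') (auto intro: Ecl_in)
  have "measure (\<mu> \<eta>) U = (\<Sum>i\<in>UNIV. indicator U (\<eta> i)) / real CARD('q)" by (rule proper[OF U_in])
  also have "(\<Sum>i\<in>UNIV. indicator U (\<eta> i)) = (\<Sum>i\<in>(UNIV::'q set). 1::real)"
    by (rule sum.cong) (auto simp: U_def Ecl_def indicator_def)
  finally have "measure (\<mu> \<eta>) U = 1" by simp
  then have aeU: "AE \<sigma> in \<mu> \<eta>. \<sigma> \<in> U" using p.prob_eq_1 U_in sets_F_sub_sub by auto
  define c where "c i = (\<Sum>k\<in>UNIV. indicator (Ecl \<Lambda> (\<eta> i)) (\<eta> k) :: real)" for i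
  have c_pos: "c i \<ge> 1" for i
  proof -
    have "indicator (Ecl \<Lambda> (\<eta> i)) (\<eta> i) \<le> c i" unfolding c_def
      by (rule member_le_sum) auto
    then show ?thesis by (simp add: Ecl_def)
  qed
  have meas_E: "measure (\<mu> \<eta>) (Ecl \<Lambda> (\<eta> i)) = c i / real CARD('q)" for i
    unfolding c_def by (rule proper[OF Ecl_in])
  have pw: "g \<sigma> = (\<Sum>i\<in>UNIV. (g (\<eta> i) / c i) * indicator (Ecl \<Lambda> (\<eta> i)) \<sigma>)" if "\<sigma> \<in> U" for \<sigma>
  proof -
    define C where "C = (\<Sum>k\<in>UNIV. indicator (Ecl \<Lambda> \<sigma>) (\<eta> k) :: real)"
    have t: "(g (\<eta> i) / c i) * indicator (Ecl \<Lambda> (\<eta> i)) \<sigma> = (g \<sigma> / C) * indicator (Ecl \<Lambda> \<sigma>) (\<eta> i)" for i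
    proof (cases "\<sigma> \<in> Ecl \<Lambda> (\<eta> i)")
      case True
      then have ag: "\<forall>x\<in>-\<Lambda>. \<sigma> x = \<eta> i x" by (simp add: Ecl_def)
      have "Ecl \<Lambda> (\<eta> i) = Ecl \<Lambda> \<sigma>" using ag by (auto simp: Ecl_def)
      then have "c i = C" unfolding c_def C_def by simp
      moreover have "g (\<eta> i) = g \<sigma>" using gs ag by metis
      moreover have "\<eta> i \<in> Ecl \<Lambda> \<sigma>" using ag by (simp add: Ecl_def)
      ultimately show ?thesis using True by simp
    next
      case False
      then have "\<eta> i \<notin> Ecl \<Lambda> \<sigma>" by (auto simp: Ecl_def) (metis ComplI)
      then show ?thesis using False by simp
    qed
    from that obtain i0 where "\<sigma> \<in> Ecl \<Lambda> (\<eta> i0)" by (auto simp: U_def)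
    then have "\<eta> i0 \<in> Ecl \<Lambda> \<sigma>" by (auto simp: Ecl_def)
    then have "1 \<le> C" unfolding C_def using member_le_sum[of i0 UNIV "\<lambda>k. indicator (Ecl \<Lambda> \<sigma>) (\<eta> k) :: real"]
      by simp
    have "(\<Sum>i\<in>UNIV. (g (\<eta> i) / c i) * indicator (Ecl \<Lambda> (\<eta> i)) \<sigma>) = (\<Sum>i\<in>UNIV. (g \<sigma> / C) * indicator (Ecl \<Lambda> \<sigma>) (\<eta> i))"
      using t by simp
    also have "\<dots> = (g \<sigma> / C) * C" unfolding C_def by (simp add: sum_distrib_left)
    also have "\<dots> = g \<sigma>" using \<open>1 \<le> C\<close> by simp
    finally show ?thesis by simp
  qed
  have sm: "(\<lambda>\<sigma>. (\<Sum>i\<in>UNIV. (g (\<eta> i) / c i) * indicator (Ecl \<Lambda> (\<eta> i)) \<sigma>)) \<in> borel_measurable Omega_M"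
    by (intro borel_measurable_sum borel_measurable_times borel_measurable_const borel_measurable_indicator Ecl_in_Omega)
  have "(\<integral>\<sigma>. g \<sigma> \<partial>\<mu> \<eta>) = (\<integral>\<sigma>. (\<Sum>i\<in>UNIV. (g (\<eta> i) / c i) * indicator (Ecl \<Lambda> (\<eta> i)) \<sigma>) \<partial>\<mu> \<eta>)"
    by (rule integral_cong_AE) (use gm pw aeU sm in \<open>auto simp: measurable_cong_sets[OF sets_mu refl]\<close>)
  also have "\<dots> = (\<Sum>i\<in>UNIV. (g (\<eta> i) / c i) * measure (\<mu> \<eta>) (Ecl \<Lambda> (\<eta> i)))"
  proof -
    have ii: "integrable (\<mu> \<eta>) (\<lambda>\<sigma>. (g (\<eta> i) / c i) * indicator (Ecl \<Lambda> (\<eta> i)) \<sigma>)" for i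
      by (intro integrable_mult_right integrable_real_indicator) (auto simp: Ecl_in_Omega p.emeasure_eq_measure)
    show ?thesis
      apply (subst Bochner_Integration.integral_sum)
       apply (rule ii)
      apply (simp only: integral_mult_right_zero Bochner_Integration.integral_indicator space_mu Int_UNIV_right)
      done
  qed
  also have "\<dots> = (\<Sum>i\<in>UNIV. g (\<eta> i) / real CARD('q))"
    by (rule sum.cong) (use c_pos in \<open>auto simp: meas_E\<close>, metis not_one_le_zero)
  finally show ?thesis by (simp add: sum_divide_distrib)
qed


lemma PP_box:
  assumes "\<And>j. A j \<in> sets Omega_M"
  shows "measure (PP \<eta>) (Pi UNIV A) = (\<Prod>j\<in>UNIV. measure (\<mu> \<eta>) (A j))"
proof -
  interpret p: prob_space "\<mu> \<eta>" by simp
  interpret pp: prob_space "PP \<eta>" by simp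
  have "emeasure (PP \<eta>) (prod_emb UNIV (\<lambda>_. \<mu> \<eta>) UNIV (Pi\<^sub>E UNIV A)) = (\<Prod>j\<in>UNIV. emeasure (\<mu> \<eta>) (A j))"
    by (rule emeasure_PiM_emb) (use assms in auto)
  moreover have "prod_emb UNIV (\<lambda>_. \<mu> \<eta>) UNIV (Pi\<^sub>E UNIV A) = Pi UNIV A"
    by (subst prod_emb_id) (auto simp: PiE_UNIV_domain)
  ultimately have "emeasure (PP \<eta>) (Pi UNIV A) = (\<Prod>j\<in>UNIV. emeasure (\<mu> \<eta>) (A j))" by simp
  also have "\<dots> = ennreal (\<Prod>j\<in>UNIV. measure (\<mu> \<eta>) (A j))"
    by (simp add: p.emeasure_eq_measure prod_ennreal measure_nonneg)
  finally show ?thesis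
    using pp.emeasure_eq_measure by (simp add: measure_nonneg prod_nonneg)
qed

lemma max_principle:
  fixes h :: "('q \<Rightarrow> 'v \<Rightarrow> 'a) \<Rightarrow> real"
  assumes hm: "h \<in> borel_measurable (PiM UNIV (\<lambda>_::'q. Omega_M))"
    and hb: "\<And>\<zeta>. \<bar>h \<zeta>\<bar> \<le> B"
    and hs: "\<And>\<zeta> \<zeta>'. (\<forall>i. \<forall>x\<in>-\<Lambda>. \<zeta> i x = \<zeta>' i x) \<Longrightarrow> h \<zeta> = h \<zeta>'"
    and hh: "\<And>\<eta>. (\<integral>\<zeta>. h \<zeta> \<partial>PP \<eta>) = h \<eta>"
    and h0: "\<And>\<omega>. h (\<lambda>_. \<omega>) = 0"
  shows "h \<eta> \<le> 0"
proof (rule ccontr)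
  assume "\<not> h \<eta> \<le> 0"
  define M where "M = Max ((\<lambda>t. h (\<eta> \<circ> t)) ` (UNIV :: ('q \<Rightarrow> 'q) set))"
  have fin: "finite ((\<lambda>t. h (\<eta> \<circ> t)) ` (UNIV :: ('q \<Rightarrow> 'q) set))" by simp
  have leM: "h (\<eta> \<circ> t) \<le> M" for t unfolding M_def by (rule Max_ge[OF fin]) simp
  have "M \<in> (\<lambda>t. h (\<eta> \<circ> t)) ` UNIV" unfolding M_def by (rule Max_in[OF fin]) simp
  then obtain t0 where t0: "h (\<eta> \<circ> t0) = M" by auto
  have "h \<eta> \<le> M" using leM[of id] by simp
  with \<open>\<not> h \<eta> \<le> 0\<close> have Mpos: "M > 0" by simp
  define \<xi> where "\<xi> = \<eta> \<circ> t0"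
  obtain k0 :: 'q where True by simp
  define U where "U = (\<Union>i. Ecl \<Lambda> (\<xi> i))"
  have U_in: "U \<in> sets (F_sub (-\<Lambda>))" unfolding U_def
    by (rule sets.countable_UN'') (auto intro: Ecl_in)
  have "measure (\<mu> \<xi>) U = (\<Sum>i\<in>UNIV. indicator U (\<xi> i)) / real CARD('q)" by (rule proper[OF U_in])
  also have "(\<Sum>i\<in>UNIV. indicator U (\<xi> i)) = (\<Sum>i\<in>(UNIV::'q set). 1::real)"
    by (rule sum.cong) (auto simp: U_def Ecl_def indicator_def)
  finally have mU: "measure (\<mu> \<xi>) U = 1" by simp
  define R where "R = Pi UNIV (\<lambda>_::'q. Ecl \<Lambda> (\<xi> k0))"
  have R_in: "R \<in> sets (PP \<xi>)" unfolding R_def sets_PP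
    using sets_PiM_I_finite[of "UNIV::'q set" "\<lambda>_. Ecl \<Lambda> (\<xi> k0)" "\<lambda>_::'q. Omega_M"] Ecl_in_Omega[of \<Lambda> "\<xi> k0"]
    by (simp add: PiE_UNIV_domain)
  have "measure (\<mu> \<xi>) (Ecl \<Lambda> (\<xi> k0)) = (\<Sum>i\<in>UNIV. indicator (Ecl \<Lambda> (\<xi> k0)) (\<xi> i)) / real CARD('q)"
    by (rule proper[OF Ecl_in])
  moreover have "(\<Sum>i\<in>UNIV. indicator (Ecl \<Lambda> (\<xi> k0)) (\<xi> i)) \<ge> (indicator (Ecl \<Lambda> (\<xi> k0)) (\<xi> k0) :: real)"
    by (rule member_le_sum) auto
  ultimately have "measure (\<mu> \<xi>) (Ecl \<Lambda> (\<xi> k0)) > 0" by (auto simp: Ecl_def)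
  then have pR: "measure (PP \<xi>) R > 0" unfolding R_def
    by (subst PP_box) (auto intro: Ecl_in_Omega prod_pos)
  have "measure (PP \<xi>) (Pi UNIV (\<lambda>_. U)) = 1"
    by (subst PP_box) (use mU U_in sets_F_sub_sub in auto)
  then have aeU: "AE \<zeta> in PP \<xi>. \<zeta> \<in> Pi UNIV (\<lambda>_. U)"
    using prob_space.prob_eq_1[OF prob_PP, of "Pi UNIV (\<lambda>_. U)" \<xi>] U_in sets_F_sub_sub
      sets_PiM_I_finite[of "UNIV::'q set" "\<lambda>_. U" "\<lambda>_::'q. Omega_M"] sets_PP[of \<xi>]
    by (auto simp: PiE_UNIV_domain)
  have bound: "h \<zeta> \<le> M * indicator (- R) \<zeta>" if "\<zeta> \<in> Pi UNIV (\<lambda>_. U)" for \<zeta>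
  proof (cases "\<zeta> \<in> R")
    case True
    then have "h \<zeta> = h (\<lambda>_. \<xi> k0)" by (intro hs) (auto simp: R_def Ecl_def)
    then show ?thesis using h0 True by simp
  next
    case False
    have "\<forall>j. \<exists>i. \<zeta> j \<in> Ecl \<Lambda> (\<xi> i)" using that by (auto simp: U_def)
    then obtain t where t: "\<And>j. \<zeta> j \<in> Ecl \<Lambda> (\<xi> (t j))" by metis
    have "h \<zeta> = h (\<eta> \<circ> (t0 \<circ> t))" by (rule hs) (use t in \<open>auto simp: Ecl_def \<xi>_def\<close>)
    then show ?thesis using leM False by simp
  qed
  interpret pp: prob_space "PP \<xi>" by simp
  have hmP: "h \<in> borel_measurable (PP \<xi>)" by (rule meas_PP[OF hm])
  have hint: "integrable (PP \<xi>) h"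
    by (rule pp.integrable_const_bound[of _ B]) (use hb hmP in auto)
  have "(\<integral>\<zeta>. h \<zeta> \<partial>PP \<xi>) \<le> (\<integral>\<zeta>. M * indicator (- R) \<zeta> \<partial>PP \<xi>)"
  proof (rule integral_mono_AE[OF hint])
    have cR: "- R \<in> sets (PP \<xi>)" using sets.compl_sets[OF R_in] by (simp add: Compl_eq_Diff_UNIV)
    show "integrable (PP \<xi>) (\<lambda>\<zeta>. M * indicator (- R) \<zeta>)"
      using cR by (intro integrable_mult_right integrable_real_indicator) (auto simp: pp.emeasure_eq_measure)
    show "AE \<zeta> in PP \<xi>. h \<zeta> \<le> M * indicator (- R) \<zeta>" using aeU bound by auto
  qed
  also have "\<dots> = M * measure (PP \<xi>) (- R)"
    by (simp add: Bochner_Integration.integral_indicator)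
  also have "measure (PP \<xi>) (- R) = 1 - measure (PP \<xi>) R"
    using pp.prob_compl[OF R_in] by (simp add: Compl_eq_Diff_UNIV)
  finally have "h \<xi> \<le> M * (1 - measure (PP \<xi>) R)" using hh by simp
  also have "\<dots> < M" using Mpos pR by (simp add: algebra_simps)
  finally show False using t0 \<xi>_def by simp
qed


definition th :: "('v \<Rightarrow> 'a) set \<Rightarrow> ('v \<Rightarrow> 'a) \<Rightarrow> real" where
  "th A \<omega> = measure (\<mu> (\<lambda>_::'q. \<omega>)) A"

lemma const_meas: "(\<lambda>\<omega>::'v \<Rightarrow> 'a. \<lambda>_::'q. \<omega>) \<in> Omega_M \<rightarrow>\<^sub>M PiM UNIV (\<lambda>_::'q. F_sub (-\<Lambda>))"
  by (rule measurable_PiM_single'[where f="\<lambda>i x. x"]) (auto simp: id_Omega_F space_PiM PiE_UNIV_domain)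

lemma th_meas: "A \<in> sets Omega_M \<Longrightarrow> th A \<in> borel_measurable Omega_M"
  unfolding th_def using measurable_compose[OF const_meas kmeas] by simp

lemma th_sat: "(\<forall>x\<in>-\<Lambda>. \<omega> x = \<omega>' x) \<Longrightarrow> A \<in> sets Omega_M \<Longrightarrow> th A \<omega> = th A \<omega>'"
  unfolding th_def by (rule meas_sat[OF kmeas]) auto

lemma th_bounds: "0 \<le> th A \<omega>" "th A \<omega> \<le> 1"
  unfolding th_def using prob_space.prob_le_1[OF prob] by auto

lemma comp_meas:
  fixes g :: "('v \<Rightarrow> 'a) \<Rightarrow> real"
  assumes "g \<in> borel_measurable Omega_M"
  shows "(\<lambda>\<zeta>::'q \<Rightarrow> 'v \<Rightarrow> 'a. g (\<zeta> i)) \<in> borel_measurable (PiM UNIV (\<lambda>_. Omega_M))"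
  by (rule measurable_PiM_component_rev) (use assms in auto)

lemma comp_integral:
  fixes g :: "('v \<Rightarrow> 'a) \<Rightarrow> real"
  assumes "g \<in> borel_measurable Omega_M"
  shows "(\<integral>\<zeta>. g (\<zeta> i) \<partial>PP \<eta>) = (\<integral>\<sigma>. g \<sigma> \<partial>\<mu> \<eta>)"
proof -
  have gm: "g \<in> borel_measurable (\<mu> \<eta>)" using assms by (simp add: measurable_cong_sets[OF sets_mu refl])
  have "(\<lambda>\<omega>. \<omega> i) \<in> PP \<eta> \<rightarrow>\<^sub>M \<mu> \<eta>" by (rule measurable_component_singleton) simp
  from integral_distr[OF this gm] show ?thesis
    using distr_PiM_component[of UNIV "\<lambda>_::'q. \<mu> \<eta>" i] by simp
qed

lemma struct_lemma:
  assumes A: "A \<in> sets Omega_M" and B: "B \<in> sets (F_sub (-\<Lambda>))"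
  shows "measure (\<mu> \<eta>) (A \<inter> B) = (\<Sum>i\<in>UNIV. indicator B (\<eta> i) * th A (\<eta> i)) / real CARD('q)"
proof -
  have BO: "B \<in> sets Omega_M" using B sets_F_sub_sub by auto
  have AB: "A \<inter> B \<in> sets Omega_M" using A BO by auto
  define g where "g \<sigma> = indicator B \<sigma> * th A \<sigma>" for \<sigma>
  have gm: "g \<in> borel_measurable Omega_M" unfolding g_def
    using th_meas[OF A] BO by (intro borel_measurable_times borel_measurable_indicator) auto
  have gs: "g \<sigma> = g \<sigma>'" if "\<forall>x\<in>-\<Lambda>. \<sigma> x = \<sigma>' x" for \<sigma> \<sigma>'
    unfolding g_def using th_sat[OF that A] F_sub_sat[OF B that] by (simp add: indicator_def)
  define H where "H \<zeta> = measure (\<mu> \<zeta>) (A \<inter> B) - (\<Sum>i\<in>UNIV. g (\<zeta> i)) / real CARD('q)" for \<zeta>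
  have Hm: "H \<in> borel_measurable (PiM UNIV (\<lambda>_::'q. Omega_M))"
  proof -
    have "(\<lambda>\<zeta>. measure (\<mu> \<zeta>) (A \<inter> B)) \<in> borel_measurable (PiM UNIV (\<lambda>_::'q. Omega_M))"
      by (rule PiM_F_to_Omega[OF kmeas[OF AB]])
    moreover have "(\<lambda>\<zeta>. g (\<zeta> i)) \<in> borel_measurable (PiM UNIV (\<lambda>_::'q. Omega_M))" for i
      by (rule comp_meas[OF gm])
    ultimately show ?thesis unfolding H_def by (intro borel_measurable_diff borel_measurable_divide borel_measurable_sum) auto
  qed
  have g01: "0 \<le> g \<sigma>" "g \<sigma> \<le> 1" for \<sigma> unfolding g_def using th_bounds[of A \<sigma>] by (auto simp: indicator_def)
  have sum01: "0 \<le> (\<Sum>i\<in>UNIV. g (\<zeta> i)) / real CARD('q)" "(\<Sum>i\<in>UNIV. g (\<zeta> i)) / real CARD('q) \<le> 1" for \<zeta> :: "'q \<Rightarrow> 'v \<Rightarrow> 'a"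
  proof -
    show "0 \<le> (\<Sum>i\<in>UNIV. g (\<zeta> i)) / real CARD('q)" using g01 by (simp add: sum_nonneg)
    have "(\<Sum>i\<in>UNIV. g (\<zeta> i)) \<le> (\<Sum>i\<in>(UNIV::'q set). 1)" by (rule sum_mono) (use g01 in auto)
    then show "(\<Sum>i\<in>UNIV. g (\<zeta> i)) / real CARD('q) \<le> 1" by simp
  qed
  have Hb: "\<bar>H \<zeta>\<bar> \<le> 2" for \<zeta> :: "'q \<Rightarrow> 'v \<Rightarrow> 'a"
    using sum01[of \<zeta>] prob_space.prob_le_1[OF prob, of \<zeta> "A \<inter> B"] measure_nonneg[of "\<mu> \<zeta>" "A \<inter> B"]
    unfolding H_def by linarith
  have Hs: "H \<zeta> = H \<zeta>'" if "\<forall>i. \<forall>x\<in>-\<Lambda>. \<zeta> i x = \<zeta>' i x" for \<zeta> \<zeta>' :: "'q \<Rightarrow> 'v \<Rightarrow> 'a"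
  proof -
    have "measure (\<mu> \<zeta>) (A \<inter> B) = measure (\<mu> \<zeta>') (A \<inter> B)"
      by (rule meas_sat[OF kmeas[OF AB] that])
    moreover have "g (\<zeta> i) = g (\<zeta>' i)" for i using gs that by blast
    ultimately show ?thesis unfolding H_def by simp
  qed
  have Hh: "(\<integral>\<zeta>. H \<zeta> \<partial>PP \<eta>') = H \<eta>'" for \<eta>' :: "'q \<Rightarrow> 'v \<Rightarrow> 'a"
  proof -
    interpret pp: prob_space "PP \<eta>'" by simp
    have i1: "integrable (PP \<eta>') (\<lambda>\<zeta>. measure (\<mu> \<zeta>) (A \<inter> B))"
      by (rule pp.integrable_const_bound[of _ 1])
         (use prob_space.prob_le_1[OF prob] PiM_F_to_Omega[OF kmeas[OF AB]] in \<open>auto intro: meas_PP\<close>)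
    have i2: "integrable (PP \<eta>') (\<lambda>\<zeta>. g (\<zeta> i))" for i
      by (rule pp.integrable_const_bound[of _ 1])
         (use g01 comp_meas[OF gm] in \<open>auto intro: meas_PP\<close>)
    have "(\<integral>\<zeta>. H \<zeta> \<partial>PP \<eta>') = (\<integral>\<zeta>. measure (\<mu> \<zeta>) (A \<inter> B) \<partial>PP \<eta>') - (\<Sum>i\<in>UNIV. (\<integral>\<zeta>. g (\<zeta> i) \<partial>PP \<eta>')) / real CARD('q)"
      unfolding H_def using i1 i2
      by (simp add: Bochner_Integration.integral_sum Bochner_Integration.integral_diff)
    also have "\<dots> = measure (\<mu> \<eta>') (A \<inter> B) - (\<Sum>i\<in>(UNIV::'q set). (\<Sum>k\<in>UNIV. g (\<eta>' k)) / real CARD('q)) / real CARD('q)"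
      using idem[OF AB, of \<eta>'] comp_integral[OF gm] mixture_integral[OF gm gs] by simp
    also have "\<dots> = H \<eta>'" unfolding H_def by simp
    finally show ?thesis .
  qed
  have H0: "H (\<lambda>_::'q. \<omega>) = 0" for \<omega>
  proof -
    interpret p: prob_space "\<mu> (\<lambda>_::'q. \<omega>)" by simp
    have mB: "measure (\<mu> (\<lambda>_::'q. \<omega>)) B = indicator B \<omega>"
      using proper[OF B, of "\<lambda>_. \<omega>"] by simp
    have "measure (\<mu> (\<lambda>_::'q. \<omega>)) (A \<inter> B) = indicator B \<omega> * th A \<omega>"
    proof (cases "\<omega> \<in> B")
      case True
      then have "AE \<sigma> in \<mu> (\<lambda>_::'q. \<omega>). \<sigma> \<in> B" using p.prob_eq_1 mB BO by auto
      then have "measure (\<mu> (\<lambda>_::'q. \<omega>)) (A \<inter> B) = measure (\<mu> (\<lambda>_::'q. \<omega>)) A"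
        by (intro p.finite_measure_eq_AE) (use A BO in auto)
      then show ?thesis using True by (simp add: th_def)
    next
      case False
      have "measure (\<mu> (\<lambda>_::'q. \<omega>)) (A \<inter> B) \<le> measure (\<mu> (\<lambda>_::'q. \<omega>)) B"
        by (rule p.finite_measure_mono) (use BO in auto)
      then show ?thesis using False mB measure_nonneg[of "\<mu> (\<lambda>_::'q. \<omega>)" "A \<inter> B"] by simp
    qed
    then show ?thesis unfolding H_def g_def by simp
  qed
  have "H \<eta> \<le> 0"
    apply (rule max_principle[where h=H and B=2])
    apply (rule Hm)
    apply (rule Hb)
    apply (rule Hs, assumption)
    apply (rule Hh)
    apply (rule H0)
    done
  moreover have "- H \<eta> \<le> 0"
    by (rule max_principle[of "\<lambda>\<zeta>. - H \<zeta>" 2]) (use Hm Hb Hs Hh H0 in auto)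
  ultimately have "H \<eta> = 0" by simp
  then show ?thesis unfolding H_def g_def by simp
qed


lemma cyl_conv:
  assumes ql: "quasilocal \<gamma>" and W: "finite W" and conv: "seq_conv \<eta>s \<eta>"
  shows "(\<lambda>n. measure (\<mu> (\<eta>s n)) {\<sigma>. \<forall>x\<in>W. \<sigma> x = \<xi> x}) \<longlonglongrightarrow> measure (\<mu> \<eta>) {\<sigma>. \<forall>x\<in>W. \<sigma> x = \<xi> x}"
proof -
  define A where "A = {\<sigma>::'v\<Rightarrow>'a. \<forall>x\<in>W \<inter> \<Lambda>. \<sigma> x = \<xi> x}"
  define B where "B = {\<sigma>::'v\<Rightarrow>'a. \<forall>x\<in>W - \<Lambda>. \<sigma> x = \<xi> x}"
  have AF: "A \<in> sets (F_sub \<Lambda>)" unfolding A_def by (rule cyl_in_F_sub) auto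
  then have AO: "A \<in> sets Omega_M" using sets_F_sub_sub by auto
  have BF: "B \<in> sets (F_sub (-\<Lambda>))" unfolding B_def by (rule cyl_in_F_sub) auto
  have eq: "{\<sigma>. \<forall>x\<in>W. \<sigma> x = \<xi> x} = A \<inter> B" unfolding A_def B_def by auto
  have t1: "(\<lambda>n. indicator B (\<eta>s n i) :: real) \<longlonglongrightarrow> indicator B (\<eta> i)" for i
  proof (rule tendsto_eventually)
    have "\<forall>\<^sub>F n in sequentially. \<forall>x\<in>W. \<eta>s n i x = \<eta> i x"
      using conv W unfolding seq_conv_def by (simp add: eventually_ball_finite)
    then show "\<forall>\<^sub>F n in sequentially. (indicator B (\<eta>s n i) :: real) = indicator B (\<eta> i)"
      by eventually_elim (auto simp: B_def indicator_def)
  qed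
  have t2: "(\<lambda>n. th A (\<eta>s n i)) \<longlonglongrightarrow> th A (\<eta> i)" for i
  proof -
    have "seq_continuous (\<lambda>\<eta>. measure (\<gamma> \<Lambda> \<eta>) A)" using ql finL AF unfolding quasilocal_def by auto
    moreover have "seq_conv (\<lambda>n. \<lambda>_::'q. \<eta>s n i) (\<lambda>_. \<eta> i)"
      using conv unfolding seq_conv_def by auto
    ultimately show ?thesis unfolding seq_continuous_def th_def by blast
  qed
  have "(\<lambda>n. (\<Sum>i\<in>UNIV. indicator B (\<eta>s n i) * th A (\<eta>s n i)) / real CARD('q))
        \<longlonglongrightarrow> (\<Sum>i\<in>UNIV. indicator B (\<eta> i) * th A (\<eta> i)) / real CARD('q)"
    by (intro tendsto_divide tendsto_const tendsto_sum tendsto_mult t1 t2) auto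
  then show ?thesis unfolding eq using struct_lemma[OF AO BF] by simp
qed

end

lemma seq_compact:
  fixes s :: "nat \<Rightarrow> ('q::finite \<Rightarrow> 'v::countable \<Rightarrow> 'a::finite)"
  shows "\<exists>r \<sigma>. strict_mono r \<and> seq_conv (s \<circ> r) \<sigma>"
proof -
  define c :: "nat \<Rightarrow> 'q \<times> 'v" where "c n = from_nat n" for n
  define P where "P n r \<longleftrightarrow> (\<exists>v. \<forall>k. s (r k) (fst (c n)) (snd (c n)) = v)" for n and r :: "nat \<Rightarrow> nat"
  interpret subseqs P
  proof
    fix n and s' :: "nat \<Rightarrow> nat" assume "strict_mono s'"
    define u where "u k = s (s' k) (fst (c n)) (snd (c n))" for k
    have "finite (u ` UNIV)" by simp
    from inf_img_fin_domE[OF this infinite_UNIV_nat] obtain v where "infinite (u -` {v})" by blast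
    from infinite_enumerate[OF this] obtain r' :: "nat \<Rightarrow> nat" where r': "strict_mono r'" "\<And>k. r' k \<in> u -` {v}" by auto
    show "\<exists>r'. strict_mono r' \<and> P n (s' \<circ> r')"
      using r' unfolding P_def u_def by (intro exI[of _ r']) auto
  qed
  have "P k (diagseq \<circ> ((+) (Suc k)))" for k
    by (rule diagseq_holds) (auto simp: P_def)
  then have "\<forall>k. \<exists>v. \<forall>m. s (diagseq (Suc k + m)) (fst (c k)) (snd (c k)) = v"
    by (auto simp: P_def)
  then obtain V where V: "\<And>k m. s (diagseq (Suc k + m)) (fst (c k)) (snd (c k)) = V k" by metis
  define \<sigma> :: "'q \<Rightarrow> 'v \<Rightarrow> 'a" where "\<sigma> j x = V (to_nat (j, x))" for j x
  have "seq_conv (s \<circ> diagseq) \<sigma>"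
    unfolding seq_conv_def
  proof (intro allI)
    fix j :: 'q and x :: 'v
    define k where "k = to_nat (j, x)"
    have ck: "c k = (j, x)" unfolding c_def k_def by simp
    show "\<forall>\<^sub>F n in sequentially. (s \<circ> diagseq) n j x = \<sigma> j x"
      unfolding eventually_sequentially
    proof (intro exI[of _ "Suc k"] allI impI)
      fix n assume "Suc k \<le> n"
      then have "n = Suc k + (n - Suc k)" by simp
      then have "s (diagseq n) j x = V k" using V[of k "n - Suc k"] ck by (metis fst_conv snd_conv)
      then show "(s \<circ> diagseq) n j x = \<sigma> j x" by (simp add: \<sigma>_def k_def)
    qed
  qed
  then show ?thesis using subseq_diagseq by blast
qed

definition ext :: "nat \<Rightarrow> ('q \<Rightarrow> 'v::countable \<Rightarrow> 'a) \<Rightarrow> ('q \<Rightarrow> 'v \<Rightarrow> 'a)" where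
  "ext N \<sigma> = (\<lambda>j x. if to_nat x < N then \<sigma> j x else undefined)"

lemma unif_approx:
  fixes f :: "('q::finite \<Rightarrow> 'v::countable \<Rightarrow> 'a::finite) \<Rightarrow> real"
  assumes fc: "seq_continuous f" and e: "\<epsilon> > 0"
  shows "\<exists>N. \<forall>\<sigma> \<sigma>'. (\<forall>j x. to_nat x < N \<longrightarrow> \<sigma> j x = \<sigma>' j x) \<longrightarrow> \<bar>f \<sigma> - f \<sigma>'\<bar> \<le> \<epsilon>"
proof (rule ccontr)
  assume "\<not> ?thesis"
  then have "\<forall>N. \<exists>\<sigma> \<sigma>'. (\<forall>j x. to_nat x < N \<longrightarrow> \<sigma> j x = \<sigma>' j x) \<and> \<not> \<bar>f \<sigma> - f \<sigma>'\<bar> \<le> \<epsilon>"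
    by blast
  then obtain S S' where SS: "\<And>N. (\<forall>j x. to_nat x < N \<longrightarrow> S N j x = S' N j x)"
      "\<And>N. \<not> \<bar>f (S N) - f (S' N)\<bar> \<le> \<epsilon>" by metis
  obtain r \<sigma> where r: "strict_mono r" and c1: "seq_conv (S \<circ> r) \<sigma>" using seq_compact by blast
  have c2: "seq_conv (S' \<circ> r) \<sigma>" unfolding seq_conv_def
  proof (intro allI)
    fix j :: 'q and x :: 'v
    have "\<forall>\<^sub>F n in sequentially. (S \<circ> r) n j x = \<sigma> j x" using c1 unfolding seq_conv_def by blast
    moreover have "\<forall>\<^sub>F n in sequentially. n > to_nat x" by (rule eventually_gt_at_top)
    ultimately show "\<forall>\<^sub>F n in sequentially. (S' \<circ> r) n j x = \<sigma> j x"
    proof eventually_elim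
      case (elim n)
      have "r n \<ge> n" using r by (rule seq_suble)
      then have "S (r n) j x = S' (r n) j x" using SS(1)[of "r n"] elim by auto
      then show ?case using elim by simp
    qed
  qed
  have l1: "(\<lambda>n. f ((S \<circ> r) n)) \<longlonglongrightarrow> f \<sigma>" and l2: "(\<lambda>n. f ((S' \<circ> r) n)) \<longlonglongrightarrow> f \<sigma>"
    using fc c1 c2 unfolding seq_continuous_def by blast+
  have "(\<lambda>n. f ((S \<circ> r) n) - f ((S' \<circ> r) n)) \<longlonglongrightarrow> f \<sigma> - f \<sigma>"
    by (rule tendsto_diff[OF l1 l2])
  then have "(\<lambda>n. f ((S \<circ> r) n) - f ((S' \<circ> r) n)) \<longlonglongrightarrow> 0" by simp
  from LIMSEQ_D[OF this e] obtain no where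
    "\<And>n. n \<ge> no \<Longrightarrow> norm (f ((S \<circ> r) n) - f ((S' \<circ> r) n) - 0) < \<epsilon>" by blast
  then have "\<bar>f ((S \<circ> r) no) - f ((S' \<circ> r) no)\<bar> < \<epsilon>" by simp
  then obtain n where "\<bar>f ((S \<circ> r) n) - f ((S' \<circ> r) n)\<bar> < \<epsilon>" by blast
  then show False using SS(2)[of "r n"] by simp
qed


definition Cy :: "nat \<Rightarrow> ('v::countable \<Rightarrow> 'a) \<Rightarrow> ('v \<Rightarrow> 'a) set" where
  "Cy N t = {s. \<forall>x\<in>{x. to_nat x < N}. s x = t x}"

lemma finite_W: "finite {x::'v::countable. to_nat x < N}"
proof -
  have "{x::'v. to_nat x < N} = to_nat -` {..<N}" by auto
  then show ?thesis using finite_vimageI[of "{..<N}" "to_nat :: 'v \<Rightarrow> nat"] by simp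
qed

lemma Cy_in: "Cy N (t::'v::countable \<Rightarrow> 'a) \<in> sets Omega_M"
  unfolding Cy_def using cyl_in_F_sub[of "{x. to_nat x < N}" UNIV t] sets_F_sub_sub by blast

lemma finite_range_ext: "finite (range (ext N :: ('q::finite \<Rightarrow> 'v::countable \<Rightarrow> 'a::finite) \<Rightarrow> _))"
proof -
  define W where "W = {x::'v. to_nat x < N}"
  define G :: "('q \<times> 'v \<Rightarrow> 'a) \<Rightarrow> ('q \<Rightarrow> 'v \<Rightarrow> 'a)" where
    "G h = (\<lambda>j x. if to_nat x < N then h (j, x) else undefined)" for h
  have "range (ext N :: ('q \<Rightarrow> 'v \<Rightarrow> 'a) \<Rightarrow> _) \<subseteq> G ` (PiE (UNIV \<times> W) (\<lambda>_. UNIV))"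
  proof
    fix \<tau> assume "\<tau> \<in> range (ext N :: ('q \<Rightarrow> 'v \<Rightarrow> 'a) \<Rightarrow> _)"
    then obtain \<sigma> where \<sigma>: "\<tau> = ext N \<sigma>" by blast
    have "\<tau> = G (restrict (\<lambda>p. \<sigma> (fst p) (snd p)) (UNIV \<times> W))"
      unfolding \<sigma> G_def ext_def W_def by (auto simp: fun_eq_iff)
    then show "\<tau> \<in> G ` (PiE (UNIV \<times> W) (\<lambda>_. UNIV))" by auto
  qed
  moreover have "finite (PiE (UNIV \<times> W) (\<lambda>_::'q \<times> 'v. UNIV :: 'a set))"
    by (rule finite_PiE) (auto simp: W_def finite_W)
  ultimately show ?thesis using finite_subset by blast
qed

lemma ext_fiber:
  assumes "\<tau> \<in> range (ext N)"
  shows "{\<sigma>. ext N \<sigma> = \<tau>} = Pi UNIV (\<lambda>j. Cy N (\<tau> j))"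
  using assms by (auto simp: ext_def Cy_def fun_eq_iff)

lemma fiber_in: "Pi UNIV (\<lambda>j::'q::finite. Cy N (\<tau> j :: 'v::countable \<Rightarrow> 'a)) \<in> sets (PiM UNIV (\<lambda>_::'q. Omega_M))"
proof -
  have "PiE UNIV (\<lambda>j. Cy N (\<tau> j)) \<in> sets (PiM UNIV (\<lambda>_::'q. Omega_M))"
    by (rule sets_PiM_I_finite) (auto simp: Cy_in)
  then show ?thesis by (simp add: PiE_UNIV_domain)
qed

lemma ext_pointwise:
  fixes f :: "('q::finite \<Rightarrow> 'v::countable \<Rightarrow> 'a::finite) \<Rightarrow> real"
  shows "f (ext N \<sigma>) = (\<Sum>\<tau>\<in>range (ext N). f \<tau> * indicator (Pi UNIV (\<lambda>j. Cy N (\<tau> j))) \<sigma>)"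
proof -
  have "(\<Sum>\<tau>\<in>range (ext N). f \<tau> * indicator (Pi UNIV (\<lambda>j. Cy N (\<tau> j))) \<sigma>)
      = (\<Sum>\<tau>\<in>range (ext N). if ext N \<sigma> = \<tau> then f \<tau> else 0)"
  proof (rule sum.cong[OF refl])
    fix \<tau> :: "'q \<Rightarrow> 'v \<Rightarrow> 'a" assume "\<tau> \<in> range (ext N)"
    from ext_fiber[OF this] have "\<sigma> \<in> Pi UNIV (\<lambda>j. Cy N (\<tau> j)) \<longleftrightarrow> ext N \<sigma> = \<tau>" by blast
    then show "f \<tau> * indicator (Pi UNIV (\<lambda>j. Cy N (\<tau> j))) \<sigma> = (if ext N \<sigma> = \<tau> then f \<tau> else 0)"
      by (simp add: indicator_def)
  qed
  also have "\<dots> = f (ext N \<sigma>)" by (simp add: finite_range_ext sum.delta')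
  finally show ?thesis by simp
qed

lemma ext_meas:
  fixes f :: "('q::finite \<Rightarrow> 'v::countable \<Rightarrow> 'a::finite) \<Rightarrow> real"
  shows "(\<lambda>\<sigma>. f (ext N \<sigma>)) \<in> borel_measurable (PiM UNIV (\<lambda>_::'q. Omega_M))"
  by (subst ext_pointwise, intro borel_measurable_sum borel_measurable_times borel_measurable_const
      borel_measurable_indicator fiber_in)

lemma ext_conv: "seq_conv (\<lambda>n. ext n \<sigma>) \<sigma>"
  unfolding seq_conv_def
proof (intro allI)
  fix j x
  show "\<forall>\<^sub>F n in sequentially. ext n \<sigma> j x = \<sigma> j x"
    using eventually_gt_at_top[of "to_nat x"] by eventually_elim (simp add: ext_def)
qed

lemma f_meas:
  fixes f :: "('q::finite \<Rightarrow> 'v::countable \<Rightarrow> 'a::finite) \<Rightarrow> real"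
  assumes "seq_continuous f"
  shows "f \<in> borel_measurable (PiM UNIV (\<lambda>_::'q. Omega_M))"
proof (rule borel_measurable_LIMSEQ_real)
  show "(\<lambda>n. f (ext n \<sigma>)) \<longlonglongrightarrow> f \<sigma>" for \<sigma>
    using assms ext_conv unfolding seq_continuous_def by blast
  show "(\<lambda>\<sigma>. f (ext n \<sigma>)) \<in> borel_measurable (PiM UNIV (\<lambda>_::'q. Omega_M))" for n
    by (rule ext_meas)
qed

lemma f_bounded:
  fixes f :: "('q::finite \<Rightarrow> 'v::countable \<Rightarrow> 'a::finite) \<Rightarrow> real"
  assumes "seq_continuous f"
  shows "\<exists>B. \<forall>\<sigma>. \<bar>f \<sigma>\<bar> \<le> B"
proof -
  obtain N where N: "\<And>\<sigma> \<sigma>'. (\<forall>j x. to_nat x < N \<longrightarrow> \<sigma> j x = \<sigma>' j x) \<Longrightarrow> \<bar>f \<sigma> - f \<sigma>'\<bar> \<le> 1"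
    using unif_approx[OF assms, of 1] by auto
  define B where "B = Max ((\<lambda>\<tau>. \<bar>f \<tau>\<bar>) ` range (ext N))"
  have "\<bar>f \<sigma>\<bar> \<le> B + 1" for \<sigma>
  proof -
    have "\<bar>f \<sigma> - f (ext N \<sigma>)\<bar> \<le> 1" by (rule N) (auto simp: ext_def)
    moreover have "\<bar>f (ext N \<sigma>)\<bar> \<le> B" unfolding B_def
      by (rule Max_ge) (auto simp: finite_range_ext)
    ultimately show ?thesis by linarith
  qed
  then show ?thesis by blast
qed

context qspec
begin

lemma ext_integral:
  fixes f :: "('q \<Rightarrow> 'v \<Rightarrow> 'a) \<Rightarrow> real"
  shows "(\<integral>\<sigma>. f (ext N \<sigma>) \<partial>PP \<eta>) = (\<Sum>\<tau>\<in>range (ext N). f \<tau> * (\<Prod>j\<in>UNIV. measure (\<mu> \<eta>) (Cy N (\<tau> j))))"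
proof -
  interpret pp: prob_space "PP \<eta>" by simp
  have fin: "Pi UNIV (\<lambda>j. Cy N (\<tau> j)) \<in> sets (PP \<eta>)" for \<tau> :: "'q \<Rightarrow> 'v \<Rightarrow> 'a"
    using fiber_in sets_PP by blast
  have ii: "integrable (PP \<eta>) (\<lambda>\<sigma>. f \<tau> * indicator (Pi UNIV (\<lambda>j. Cy N (\<tau> j))) \<sigma>)" for \<tau> :: "'q \<Rightarrow> 'v \<Rightarrow> 'a"
    by (intro integrable_mult_right integrable_real_indicator fin) (simp add: pp.emeasure_eq_measure)
  have "(\<integral>\<sigma>. f (ext N \<sigma>) \<partial>PP \<eta>) = (\<integral>\<sigma>. (\<Sum>\<tau>\<in>range (ext N). f \<tau> * indicator (Pi UNIV (\<lambda>j. Cy N (\<tau> j))) \<sigma>) \<partial>PP \<eta>)"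
    by (subst ext_pointwise) (rule refl)
  also have "\<dots> = (\<Sum>\<tau>\<in>range (ext N). f \<tau> * measure (PP \<eta>) (Pi UNIV (\<lambda>j. Cy N (\<tau> j))))"
    apply (subst Bochner_Integration.integral_sum)
     apply (rule ii)
    apply (simp only: integral_mult_right_zero Bochner_Integration.integral_indicator space_PP Int_UNIV_right)
    done
  also have "\<dots> = (\<Sum>\<tau>\<in>range (ext N). f \<tau> * (\<Prod>j\<in>UNIV. measure (\<mu> \<eta>) (Cy N (\<tau> j))))"
    by (simp add: PP_box Cy_in)
  finally show ?thesis .
qed

end

theorem mainTheorem4:
  fixes \<gamma> :: "'v::countable set \<Rightarrow> ('q::finite \<Rightarrow> 'v \<Rightarrow> 'a::finite) \<Rightarrow> ('v \<Rightarrow> 'a) measure"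
    and f :: "('q \<Rightarrow> 'v \<Rightarrow> 'a) \<Rightarrow> real"
    and \<Lambda> :: "'v set"
  assumes "q_specification \<gamma>"
    and "quasilocal \<gamma>"
    and "seq_continuous f"
    and "finite \<Lambda>"
  shows "seq_continuous (\<lambda>\<eta>. \<integral>\<sigma>. f \<sigma> \<partial>(PiM UNIV (\<lambda>i. \<gamma> \<Lambda> \<eta>)))"
proof -
  interpret qspec \<gamma> \<Lambda> using assms(1,4) by unfold_locales
  note fc = assms(3)
  obtain Bf where Bf: "\<And>\<sigma>. \<bar>f \<sigma>\<bar> \<le> Bf" using f_bounded[OF fc] by blast
  have fm: "f \<in> borel_measurable (PP \<eta>)" for \<eta> by (rule meas_PP[OF f_meas[OF fc]])
  have approx: "\<bar>(\<integral>\<sigma>. f \<sigma> \<partial>PP \<eta>) - (\<integral>\<sigma>. f (ext N \<sigma>) \<partial>PP \<eta>)\<bar> \<le> \<epsilon>"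
    if N: "\<And>\<sigma> \<sigma>'. (\<forall>j x. to_nat x < N \<longrightarrow> \<sigma> j x = \<sigma>' j x) \<Longrightarrow> \<bar>f \<sigma> - f \<sigma>'\<bar> \<le> \<epsilon>" for N \<epsilon> \<eta>
  proof -
    interpret pp: prob_space "PP \<eta>" by simp
    have d: "\<bar>f \<sigma> - f (ext N \<sigma>)\<bar> \<le> \<epsilon>" for \<sigma> by (rule N) (auto simp: ext_def)
    have i1: "integrable (PP \<eta>) f" by (rule pp.integrable_const_bound[of _ Bf]) (use Bf fm in auto)
    have i2: "integrable (PP \<eta>) (\<lambda>\<sigma>. f (ext N \<sigma>))"
      by (rule pp.integrable_const_bound[of _ Bf]) (use Bf meas_PP[OF ext_meas] in auto)
    have "\<bar>(\<integral>\<sigma>. f \<sigma> - f (ext N \<sigma>) \<partial>PP \<eta>)\<bar> \<le> (\<integral>\<sigma>. \<epsilon> \<partial>PP \<eta>)"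
      using integral_norm_bound[of "PP \<eta>" "\<lambda>\<sigma>. f \<sigma> - f (ext N \<sigma>)"]
        integral_mono[of "PP \<eta>" "\<lambda>\<sigma>. \<bar>f \<sigma> - f (ext N \<sigma>)\<bar>" "\<lambda>_. \<epsilon>"] d i1 i2
      by auto
    then show ?thesis using i1 i2 pp.prob_space by (simp add: Bochner_Integration.integral_diff)
  qed
  show ?thesis
    unfolding seq_continuous_def
  proof (intro allI impI)
    fix \<eta>s :: "nat \<Rightarrow> 'q \<Rightarrow> 'v \<Rightarrow> 'a" and \<eta> :: "'q \<Rightarrow> 'v \<Rightarrow> 'a" assume conv: "seq_conv \<eta>s \<eta>"
    show "(\<lambda>n. \<integral>\<sigma>. f \<sigma> \<partial>PP (\<eta>s n)) \<longlonglongrightarrow> (\<integral>\<sigma>. f \<sigma> \<partial>PP \<eta>)"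
    proof (rule LIMSEQ_I)
      fix e :: real assume e: "0 < e"
      obtain N where N: "\<And>\<sigma> \<sigma>'. (\<forall>j x. to_nat x < N \<longrightarrow> \<sigma> j x = \<sigma>' j x) \<Longrightarrow> \<bar>f \<sigma> - f \<sigma>'\<bar> \<le> e / 3"
        using unif_approx[OF fc, of "e / 3"] e by auto
      have "(\<lambda>n. (\<integral>\<sigma>. f (ext N \<sigma>) \<partial>PP (\<eta>s n))) \<longlonglongrightarrow> (\<integral>\<sigma>. f (ext N \<sigma>) \<partial>PP \<eta>)"
        unfolding ext_integral
        by (intro tendsto_sum tendsto_mult tendsto_const tendsto_prod cyl_conv[OF assms(2) finite_W conv, unfolded Cy_def[symmetric]])
      from LIMSEQ_D[OF this, of "e / 3"] e obtain no where
        no: "\<And>n. n \<ge> no \<Longrightarrow> norm ((\<integral>\<sigma>. f (ext N \<sigma>) \<partial>PP (\<eta>s n)) - (\<integral>\<sigma>. f (ext N \<sigma>) \<partial>PP \<eta>)) < e / 3"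
        by auto
      show "\<exists>no. \<forall>n\<ge>no. norm ((\<integral>\<sigma>. f \<sigma> \<partial>PP (\<eta>s n)) - (\<integral>\<sigma>. f \<sigma> \<partial>PP \<eta>)) < e"
      proof (intro exI allI impI)
        fix n assume "n \<ge> no"
        with no have a: "\<bar>(\<integral>\<sigma>. f (ext N \<sigma>) \<partial>PP (\<eta>s n)) - (\<integral>\<sigma>. f (ext N \<sigma>) \<partial>PP \<eta>)\<bar> < e / 3" by auto
        have b: "\<bar>(\<integral>\<sigma>. f \<sigma> \<partial>PP (\<eta>s n)) - (\<integral>\<sigma>. f (ext N \<sigma>) \<partial>PP (\<eta>s n))\<bar> \<le> e / 3"
          by (rule approx[OF N])
        have c: "\<bar>(\<integral>\<sigma>. f \<sigma> \<partial>PP \<eta>) - (\<integral>\<sigma>. f (ext N \<sigma>) \<partial>PP \<eta>)\<bar> \<le> e / 3"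
          by (rule approx[OF N])
        from a b c show "norm ((\<integral>\<sigma>. f \<sigma> \<partial>PP (\<eta>s n)) - (\<integral>\<sigma>. f \<sigma> \<partial>PP \<eta>)) < e"
          unfolding real_norm_def by (simp only: abs_less_iff abs_le_iff) linarith
      qed
    qed
  qed
qed

end
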